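(* Let $\Omega\subset\mathbb{R}^d$ ($d=2$ or $3$) and all spaces, operators, data and functionals be as described in the context. Define, for $v\in V$ and $q\in L^2(\Omega)$, $$F(v)=\begin{cases}-(f,v)+(g_N,\mathrm{tr}_0(v))_{\Gamma_N}, & v\in V_g,\\ +\infty, & \text{otherwise},\end{cases}\qquad G(q)=\tfrac12(\mathcal{A}q,q),$$ so that $\mathsf{J}^{p}(v)=F(v)+G(\Lambda v)$ for $v\in V_g$. Define for $\tau\in L^2(\Omega)$ the conjugate quantities $F^*(\Lambda^*\tau):=\sup_{v\in V_g}\{(\Lambda v,\tau)-F(v)\}$ and $G^*(\tau):=\sup_{q\in L^2(\Omega)}\{(\tau,q)-G(q)\}$. Then: (i) $-F^*(\Lambda^*\tau)-G^*(-\tau)=\mathsf{J}^{d}(\tau)$ if $\tau\in\Sigma_{fg}$ and $=-\infty$ otherwise, i.e. the dual variational problem of the primal problem "minimize $\mathsf{J}^{p}$ over $V_g$" is the problem "maximize $\mathsf{J}^{d}$ over $\Sigma_{fg}$"; (ii) if $u\in V_g$ is the minimizer of $\mathsf{J}^{p}$ over $V_g$ and $\sigma\in\Sigma_{fg}$ is the maximizer of $\mathsf{J}^{d}$ over $\Sigma_{fg}$, then the strong duality $\mathsf{J}^{p}(u)=\mathsf{J}^{d}(\sigma)$ holds, and the extremal relation $\sigma=-\mathcal{A}\Lambda u$ holds.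
   Context: $\Omega\subset\mathbb{R}^d$ is a bounded polyhedral domain with Lipschitz boundary; $(\cdot,\cdot)$ is the $L^2(\Omega)$ inner product (functions may be vector-valued, $L^2(\Omega)$ may mean $L^2(\Omega)^n$), $\|\cdot\|_0$ the $L^2$ norm, $(\cdot,\cdot)_{\Gamma}$ the $L^2$ inner product on a boundary part $\Gamma$. $V$ is a Hilbert space compactly embedded in $L^2(\Omega)$, $\Lambda:V\to L^2(\Omega)$ is linear and continuous, $\mathcal{A}$ is a self-adjoint operator on $L^2(\Omega)$ with $c_1\|q\|_0^2\le(\mathcal{A}q,q)\le c_2\|q\|_0^2$ ($c_1,c_2>0$), and $\mathcal{A}^{-1}$ its inverse. $\Lambda^t$ is the formal adjoint of $\Lambda$, $\Sigma=\{\tau\in L^2(\Omega):\Lambda^t\tau\in L^2(\Omega)\}$, and there are trace operators $\mathrm{tr}_0$ on $V$ and $\mathrm{tr}_1$ on $\Sigma$ (with values on $\partial\Omega$) such that $(\tau,\Lambda v)-(\Lambda^t\tau,v)=(\mathrm{tr}_1(\tau),\mathrm{tr}_0(v))_{\partial\Omega}$ for all $(v,\tau)\in V\times\Sigma$. $\partial\Omega=\overline{\Gamma}_D\cup\overline{\Gamma}_N$, $\Gamma_D\cap\Gamma_N=\emptyset$, $\mathrm{meas}(\Gamma_D)\ne0$. $V_0=\{v\in V:\mathrm{tr}_0(v)=0\text{ on }\Gamma_D\}$, and $\|\Lambda v\|_0\ge c_3\|v\|_0$ for $v\in V_0$ ($c_3>0$). It is also assumed that $\sup_{\tau\in\Sigma}\frac{(\Lambda^t\tau,v)}{\|\tau\|_0+\|\Lambda^t\tau\|_0}\ge\beta\|v\|_0$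 for all $v\in L^2(\Omega)$, some $\beta>0$. Data $f,g_D,g_N$ are $L^2$ functions (on $\Omega$, $\Gamma_D$, $\Gamma_N$ respectively); $u_g\in V$ with $\mathrm{tr}_0(u_g)=g_D$ on $\Gamma_D$; $V_g=u_g+V_0=\{v\in V:\mathrm{tr}_0(v)=g_D\text{ on }\Gamma_D\}$. These describe the boundary value problem $\Lambda^t(\mathcal{A}\Lambda u)=f$ in $\Omega$, $\mathrm{tr}_0(u)=g_D$ on $\Gamma_D$, $-\mathrm{tr}_1(\mathcal{A}\Lambda u)=g_N$ on $\Gamma_N$. Define $a(v,w)=(\mathcal{A}\Lambda v,\Lambda w)$, $b(\rho,\tau)=(\mathcal{A}^{-1}\rho,\tau)$, the primal functional $\mathsf{J}^{p}(v)=\frac12 a(v,v)-(f,v)+(g_N,\mathrm{tr}_0(v))_{\Gamma_N}$, the set $\Sigma_{fg}=\{\tau\in\Sigma:\Lambda^t\tau=-f,\ \mathrm{tr}_1(\tau)=g_N\text{ on }\Gamma_N\}$ and the dual functional $\mathsf{J}^{d}(\tau)=-\frac12 b(\tau,\tau)-(\mathrm{tr}_1(\tau),g_D)_{\Gamma_D}$. *)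

theory Defs
  imports "HOL-Analysis.Analysis"
begin

text \<open>Types:
  'v = the Hilbert space V;  'u = L2(Omega) in which V is embedded (via iota);
  'q = L2(Omega) (possibly vector valued) containing Lambda v and tau;
  'd = L2(Gamma_D), 'n = L2(Gamma_N)  (so L2(boundary) = L2(Gamma_D) x L2(Gamma_N)).
  The formal adjoint Lambda^t is defined distributionally with respect to a space
  Dt of test functions (the abstract counterpart of C_c^infinity(Omega)).\<close>

definition formal_adj_dom ::
  "('v \<Rightarrow> 'q::real_inner) \<Rightarrow> ('v \<Rightarrow> 'u::real_inner) \<Rightarrow> 'v set \<Rightarrow> 'q set" where
  "formal_adj_dom Lam iota Dt = {\<tau>. \<exists>w. \<forall>\<phi>\<in>Dt. \<tau> \<bullet> Lam \<phi> = w \<bullet> iota \<phi>}"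

definition formal_adj ::
  "('v \<Rightarrow> 'q::real_inner) \<Rightarrow> ('v \<Rightarrow> 'u::real_inner) \<Rightarrow> 'v set \<Rightarrow> 'q \<Rightarrow> 'u" where
  "formal_adj Lam iota Dt \<tau> = (THE w. \<forall>\<phi>\<in>Dt. \<tau> \<bullet> Lam \<phi> = w \<bullet> iota \<phi>)"

definition Jp :: "('q::real_inner \<Rightarrow> 'q) \<Rightarrow> ('v \<Rightarrow> 'q) \<Rightarrow> ('v \<Rightarrow> 'u::real_inner)
     \<Rightarrow> ('v \<Rightarrow> 'n::real_inner) \<Rightarrow> 'u \<Rightarrow> 'n \<Rightarrow> 'v \<Rightarrow> real" where
  "Jp A Lam iota tr0N f gN v =
     1/2 * (A (Lam v) \<bullet> Lam v) - f \<bullet> iota v + gN \<bullet> tr0N v"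

definition Jd :: "('q::real_inner \<Rightarrow> 'q) \<Rightarrow> ('q \<Rightarrow> 'd::real_inner) \<Rightarrow> 'd \<Rightarrow> 'q \<Rightarrow> real" where
  "Jd Ainv tr1D gD \<tau> = - 1/2 * (Ainv \<tau> \<bullet> \<tau>) - tr1D \<tau> \<bullet> gD"

definition Vg :: "('v \<Rightarrow> 'd) \<Rightarrow> 'd \<Rightarrow> 'v set" where
  "Vg tr0D gD = {v. tr0D v = gD}"

definition Sigma_fg :: "'q set \<Rightarrow> ('q \<Rightarrow> 'u::real_inner) \<Rightarrow> ('q \<Rightarrow> 'n)
     \<Rightarrow> 'u \<Rightarrow> 'n \<Rightarrow> 'q set" where
  "Sigma_fg Sig Lt tr1N f gN = {\<tau>\<in>Sig. Lt \<tau> = - f \<and> tr1N \<tau> = gN}"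

definition Ffun :: "('v \<Rightarrow> 'u::real_inner) \<Rightarrow> ('v \<Rightarrow> 'd) \<Rightarrow> ('v \<Rightarrow> 'n::real_inner)
     \<Rightarrow> 'u \<Rightarrow> 'd \<Rightarrow> 'n \<Rightarrow> 'v \<Rightarrow> ereal" where
  "Ffun iota tr0D tr0N f gD gN v =
     (if v \<in> Vg tr0D gD then ereal (- (f \<bullet> iota v) + gN \<bullet> tr0N v) else \<infinity>)"

definition Gfun :: "('q::real_inner \<Rightarrow> 'q) \<Rightarrow> 'q \<Rightarrow> real" where
  "Gfun A q = 1/2 * (A q \<bullet> q)"

definition Fstar :: "('v \<Rightarrow> 'q::real_inner) \<Rightarrow> ('v \<Rightarrow> 'u::real_inner) \<Rightarrow> ('v \<Rightarrow> 'd)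
     \<Rightarrow> ('v \<Rightarrow> 'n::real_inner) \<Rightarrow> 'u \<Rightarrow> 'd \<Rightarrow> 'n \<Rightarrow> 'q \<Rightarrow> ereal" where
  "Fstar Lam iota tr0D tr0N f gD gN \<tau> =
     (SUP v\<in>Vg tr0D gD. ereal (Lam v \<bullet> \<tau>) - Ffun iota tr0D tr0N f gD gN v)"

definition Gstar :: "('q::real_inner \<Rightarrow> 'q) \<Rightarrow> 'q \<Rightarrow> ereal" where
  "Gstar A \<tau> = (SUP q\<in>UNIV. ereal (\<tau> \<bullet> q - Gfun A q))"

end

theory Submission
  imports Defs
begin


lemma dense_zero:
  fixes w :: "'a::real_inner" and g :: "'b \<Rightarrow> 'a"
  assumes "closure (g ` S) = UNIV" and "\<And>x. x \<in> S \<Longrightarrow> w \<bullet> g x = 0"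
  shows "w = 0"
proof -
  have "g ` S \<subseteq> {x. w \<bullet> x = 0}" using assms(2) by auto
  then have "closure (g ` S) \<subseteq> {x. w \<bullet> x = 0}"
    by (intro closure_minimal) (auto simp: closed_hyperplane)
  then have "w \<in> {x. w \<bullet> x = 0}" using assms(1) by blast
  then have "w \<bullet> w = 0" by simp
  then show ?thesis by simp
qed

lemma quad_zero:
  fixes a b :: real
  assumes q: "\<And>t. 0 \<le> a * t + b * t\<^sup>2"
  shows "a = 0"
proof (rule ccontr)
  assume an: "a \<noteq> 0"
  define c where "c = \<bar>b\<bar> + 1"
  have cp: "c > 0" unfolding c_def by simp
  define t where "t = - a / (2 * c)"
  have h1: "0 \<le> a * t + b * t\<^sup>2" by (rule q)
  have h2: "b * t\<^sup>2 \<le> c * t\<^sup>2" unfolding c_def by (simp add: mult_right_mono)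
  have h3: "a * t + c * t\<^sup>2 = - (a * a) / (4 * c)"
    unfolding t_def using cp by (simp add: field_simps power2_eq_square)
  have "0 < a * a" using an by (simp add: zero_less_mult_iff) linarith
  then have h4: "0 < (a * a) / (4 * c)" using cp by simp
  show False using h1 h2 h3 h4 by linarith
qed

theorem theorem3p5:
  fixes Lam :: "'v::{real_inner,complete_space} \<Rightarrow> 'q::{real_inner,complete_space}"
    and iota :: "'v \<Rightarrow> 'u::{real_inner,complete_space}"
    and A Ainv :: "'q \<Rightarrow> 'q"
    and tr0D :: "'v \<Rightarrow> 'd::{real_inner,complete_space}"
    and tr0N :: "'v \<Rightarrow> 'n::{real_inner,complete_space}"
    and tr1D :: "'q \<Rightarrow> 'd" and tr1N :: "'q \<Rightarrow> 'n"
    and Dt :: "'v set"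
    and f :: 'u and gD :: 'd and gN :: 'n and ug :: 'v
    and c1 c2 c3 \<beta> :: real
  defines "Sig \<equiv> formal_adj_dom Lam iota Dt"
      and "Lt \<equiv> formal_adj Lam iota Dt"
      and "V0 \<equiv> {v. tr0D v = 0}"
  assumes
    \<comment> \<open>V compactly embedded in L2\<close>
    iota_bl: "bounded_linear iota" and iota_inj: "inj iota"
    and iota_compact: "compact (closure (iota ` cball 0 1))"
    \<comment> \<open>Lambda linear and continuous\<close>
    and Lam_bl: "bounded_linear Lam"
    \<comment> \<open>A self-adjoint, bounded above and below; Ainv its inverse\<close>
    and A_bl: "bounded_linear A"
    and A_sym: "\<And>p q. A p \<bullet> q = p \<bullet> A q"
    and c1_pos: "c1 > 0" and c2_pos: "c2 > 0"
    and A_bounds: "\<And>q. c1 * (norm q)\<^sup>2 \<le> A q \<bullet> q \<and> A q \<bullet> q \<le> c2 * (norm q)\<^sup>2"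
    and Ainv_left: "\<And>q. Ainv (A q) = q" and Ainv_right: "\<And>q. A (Ainv q) = q"
    \<comment> \<open>test functions (abstract C_c^infinity): a subspace with zero traces, dense in L2\<close>
    and Dt_sub: "subspace Dt"
    and Dt_tr: "\<And>\<phi>. \<phi> \<in> Dt \<Longrightarrow> tr0D \<phi> = 0 \<and> tr0N \<phi> = 0"
    and Dt_dense: "closure (iota ` Dt) = UNIV"
    \<comment> \<open>trace operators and Green's formula\<close>
    and tr0D_bl: "bounded_linear tr0D" and tr0N_bl: "bounded_linear tr0N"
    and tr1D_lin: "linear tr1D" and tr1N_lin: "linear tr1N"
    and green: "\<And>v \<tau>. \<tau> \<in> Sig \<Longrightarrow>
        \<tau> \<bullet> Lam v - Lt \<tau> \<bullet> iota v = tr1D \<tau> \<bullet> tr0D v + tr1N \<tau> \<bullet> tr0N v"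
    and tr0N_dense: "closure (tr0N ` V0) = UNIV"
    \<comment> \<open>meas(Gamma_D) \<noteq> 0\<close>
    and GammaD_nontriv: "(UNIV :: 'd set) \<noteq> {0}"
    \<comment> \<open>Poincare-type inequality and inf-sup condition\<close>
    and c3_pos: "c3 > 0"
    and poincare: "\<And>v. v \<in> V0 \<Longrightarrow> norm (Lam v) \<ge> c3 * norm (iota v)"
    and beta_pos: "\<beta> > 0"
    and infsup: "\<And>w. ereal (\<beta> * norm w) \<le>
        (SUP \<tau>\<in>Sig - {0}. ereal ((Lt \<tau> \<bullet> w) / (norm \<tau> + norm (Lt \<tau>))))"
    \<comment> \<open>lifting of the Dirichlet datum\<close>
    and ug: "tr0D ug = gD"
  shows
    "(\<forall>v\<in>Vg tr0D gD. ereal (Jp A Lam iota tr0N f gN v)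
         = Ffun iota tr0D tr0N f gD gN v + ereal (Gfun A (Lam v)))
     \<and> (\<forall>\<tau>. - Fstar Lam iota tr0D tr0N f gD gN \<tau> - Gstar A (- \<tau>)
         = (if \<tau> \<in> Sigma_fg Sig Lt tr1N f gN then ereal (Jd Ainv tr1D gD \<tau>) else - \<infinity>))
     \<and> (\<forall>u \<sigma>. u \<in> Vg tr0D gD
          \<longrightarrow> (\<forall>v\<in>Vg tr0D gD. Jp A Lam iota tr0N f gN u \<le> Jp A Lam iota tr0N f gN v)
          \<longrightarrow> \<sigma> \<in> Sigma_fg Sig Lt tr1N f gN
          \<longrightarrow> (\<forall>\<tau>\<in>Sigma_fg Sig Lt tr1N f gN. Jd Ainv tr1D gD \<tau> \<le> Jd Ainv tr1D gD \<sigma>)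
          \<longrightarrow> Jp A Lam iota tr0N f gN u = Jd Ainv tr1D gD \<sigma> \<and> \<sigma> = - A (Lam u))"
  proof -
  have LamL: "linear Lam" using Lam_bl bounded_linear.linear by blast
  have iotaL: "linear iota" using iota_bl bounded_linear.linear by blast
  have AL: "linear A" using A_bl bounded_linear.linear by blast
  have t0DL: "linear tr0D" using tr0D_bl bounded_linear.linear by blast
  have t0NL: "linear tr0N" using tr0N_bl bounded_linear.linear by blast
  have Apos: "A x \<bullet> x \<ge> 0" for x
    using A_bounds[of x] c1_pos by (smt (verit) mult_nonneg_nonneg zero_le_power2)
  have Azero: "x = 0" if "A x \<bullet> x = 0" for x
  proof -
    have "c1 * (norm x)\<^sup>2 \<le> 0" using A_bounds[of x] that by simp
    then have "(norm x)\<^sup>2 \<le> 0" using c1_pos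
      by (simp add: mult_le_0_iff)
    then show ?thesis by simp
  qed
  have DtV0: "\<phi> \<in> V0" if "\<phi> \<in> Dt" for \<phi> using Dt_tr[OF that] unfolding V0_def by simp
  have vgV: "v \<in> Vg tr0D gD \<longleftrightarrow> tr0D v = gD" for v unfolding Vg_def by simp
  have KEY: "\<tau> \<in> Sigma_fg Sig Lt tr1N f gN"
    if P: "\<And>w. w \<in> V0 \<Longrightarrow> \<tau> \<bullet> Lam w + f \<bullet> iota w - gN \<bullet> tr0N w = 0" for \<tau>
  proof -
    have D: "\<tau> \<bullet> Lam \<phi> = (- f) \<bullet> iota \<phi>" if "\<phi> \<in> Dt" for \<phi>
      using P[OF DtV0[OF that]] Dt_tr[OF that] by simp
    have inSig: "\<tau> \<in> Sig" unfolding Sig_def formal_adj_dom_def using D by blast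
    have LtEq: "Lt \<tau> = - f"
      unfolding Lt_def formal_adj_def
    proof (rule the_equality)
      show "\<forall>\<phi>\<in>Dt. \<tau> \<bullet> Lam \<phi> = - f \<bullet> iota \<phi>" using D by blast
    next
      fix w assume H: "\<forall>\<phi>\<in>Dt. \<tau> \<bullet> Lam \<phi> = w \<bullet> iota \<phi>"
      have "w + f = 0"
      proof (rule dense_zero[OF Dt_dense])
        fix x assume "x \<in> Dt"
        then show "(w + f) \<bullet> iota x = 0" using H D[of x] by (simp add: inner_add_left)
      qed
      then show "w = - f" by (simp add: add_eq_0_iff)
    qed
    have "tr1N \<tau> - gN = 0"
    proof (rule dense_zero[OF tr0N_dense])
      fix w assume wV: "w \<in> V0"
      have "tr0D w = 0" using wV unfolding V0_def by simp
      then have "\<tau> \<bullet> Lam w + f \<bullet> iota w = tr1N \<tau> \<bullet> tr0N w"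
        using green[OF inSig, of w] LtEq by simp
      then show "(tr1N \<tau> - gN) \<bullet> tr0N w = 0" using P[OF wV] by (simp add: inner_diff_left)
    qed
    then show ?thesis unfolding Sigma_fg_def using inSig LtEq by simp
  qed
  have GRN: "\<tau> \<bullet> Lam v + f \<bullet> iota v - gN \<bullet> tr0N v = tr1D \<tau> \<bullet> gD"
    if "\<tau> \<in> Sigma_fg Sig Lt tr1N f gN" "v \<in> Vg tr0D gD" for \<tau> v
    using green[of \<tau> v] that unfolding Sigma_fg_def Vg_def by auto
  have WD: "Jp A Lam iota tr0N f gN v - Jd Ainv tr1D gD \<tau>
      = 1/2 * (A (Lam v + Ainv \<tau>) \<bullet> (Lam v + Ainv \<tau>))"
    if "\<tau> \<in> Sigma_fg Sig Lt tr1N f gN" "v \<in> Vg tr0D gD" for \<tau> v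
  proof -
    have e1: "A (Lam v + Ainv \<tau>) \<bullet> (Lam v + Ainv \<tau>)
        = A (Lam v) \<bullet> Lam v + 2 * (\<tau> \<bullet> Lam v) + Ainv \<tau> \<bullet> \<tau>"
      using A_sym[of "Lam v" "Ainv \<tau>"] Ainv_right[of \<tau>]
      by (simp add: linear_add[OF AL] inner_add_left inner_add_right inner_commute)
    show ?thesis using GRN[OF that] e1 unfolding Jp_def Jd_def by (simp add: algebra_simps)
  qed
  have Gs: "Gstar A (- \<tau>) = ereal (1/2 * (Ainv \<tau> \<bullet> \<tau>))" for \<tau>
  proof (rule antisym)
    show "Gstar A (- \<tau>) \<le> ereal (1/2 * (Ainv \<tau> \<bullet> \<tau>))"
      unfolding Gstar_def
    proof (rule SUP_least)
      fix q :: 'q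
      have c: "Ainv \<tau> \<bullet> q = q \<bullet> Ainv \<tau>" by (rule inner_commute)
      have c2: "q \<bullet> \<tau> = \<tau> \<bullet> q" by (rule inner_commute)
      have c3: "\<tau> \<bullet> Ainv \<tau> = Ainv \<tau> \<bullet> \<tau>" by (rule inner_commute)
      have e1: "A (q + Ainv \<tau>) \<bullet> (q + Ainv \<tau>)
          = A q \<bullet> q + 2 * (\<tau> \<bullet> q) + Ainv \<tau> \<bullet> \<tau>"
        using A_sym[of q "Ainv \<tau>"] Ainv_right[of \<tau>] c c2 c3
        by (simp only: linear_add[OF AL] inner_add_left inner_add_right)
      have "0 \<le> A (q + Ainv \<tau>) \<bullet> (q + Ainv \<tau>)" by (rule Apos)
      then have "(- \<tau>) \<bullet> q - Gfun A q \<le> 1/2 * (Ainv \<tau> \<bullet> \<tau>)"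
        using e1 unfolding Gfun_def inner_minus_left by linarith
      then show "ereal ((- \<tau>) \<bullet> q - Gfun A q) \<le> ereal (1/2 * (Ainv \<tau> \<bullet> \<tau>))"
        by simp
    qed
  next
    have m: "A (- Ainv \<tau>) = - \<tau>" using Ainv_right[of \<tau>] linear_neg[OF AL, of "Ainv \<tau>"] by simp
    have c: "\<tau> \<bullet> Ainv \<tau> = Ainv \<tau> \<bullet> \<tau>" by (rule inner_commute)
    have "(- \<tau>) \<bullet> (- Ainv \<tau>) - Gfun A (- Ainv \<tau>) = 1/2 * (Ainv \<tau> \<bullet> \<tau>)"
      unfolding Gfun_def m using c by simp
    moreover have "ereal ((- \<tau>) \<bullet> (- Ainv \<tau>) - Gfun A (- Ainv \<tau>))
        \<le> (SUP q\<in>UNIV. ereal ((- \<tau>) \<bullet> q - Gfun A q))"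
      by (rule SUP_upper) simp
    ultimately show "ereal (1/2 * (Ainv \<tau> \<bullet> \<tau>)) \<le> Gstar A (- \<tau>)"
      unfolding Gstar_def by metis
  qed
  have FsRew: "Fstar Lam iota tr0D tr0N f gD gN \<tau>
      = (SUP v\<in>Vg tr0D gD. ereal (\<tau> \<bullet> Lam v + f \<bullet> iota v - gN \<bullet> tr0N v))" for \<tau>
    unfolding Fstar_def
  proof (rule SUP_cong)
    fix v assume "v \<in> Vg tr0D gD"
    moreover have "Lam v \<bullet> \<tau> = \<tau> \<bullet> Lam v" by (rule inner_commute)
    ultimately show "ereal (Lam v \<bullet> \<tau>) - Ffun iota tr0D tr0N f gD gN v
        = ereal (\<tau> \<bullet> Lam v + f \<bullet> iota v - gN \<bullet> tr0N v)"
      unfolding Ffun_def by simp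
  qed simp
  have ugV: "ug \<in> Vg tr0D gD" using ug vgV by simp
  have part1: "\<forall>v\<in>Vg tr0D gD. ereal (Jp A Lam iota tr0N f gN v)
         = Ffun iota tr0D tr0N f gD gN v + ereal (Gfun A (Lam v))"
    unfolding Jp_def Ffun_def Gfun_def by auto
  have part2: "- Fstar Lam iota tr0D tr0N f gD gN \<tau> - Gstar A (- \<tau>)
         = (if \<tau> \<in> Sigma_fg Sig Lt tr1N f gN then ereal (Jd Ainv tr1D gD \<tau>) else - \<infinity>)" for \<tau>
  proof (cases "\<tau> \<in> Sigma_fg Sig Lt tr1N f gN")
    case True
    have "Fstar Lam iota tr0D tr0N f gD gN \<tau> = (SUP v\<in>Vg tr0D gD. ereal (tr1D \<tau> \<bullet> gD))"
      unfolding FsRew using GRN[OF True] by (intro SUP_cong) auto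
    also have "\<dots> = ereal (tr1D \<tau> \<bullet> gD)" using ugV by (intro SUP_const) auto
    finally show ?thesis using True Gs[of \<tau>] unfolding Jd_def by simp
  next
    case False
    then obtain w where wV: "w \<in> V0" and a: "\<tau> \<bullet> Lam w + f \<bullet> iota w - gN \<bullet> tr0N w \<noteq> 0"
      using KEY by blast
    define a where "a = \<tau> \<bullet> Lam w + f \<bullet> iota w - gN \<bullet> tr0N w"
    define h where "h v = \<tau> \<bullet> Lam v + f \<bullet> iota v - gN \<bullet> tr0N v" for v
    have hlin: "h (ug + t *\<^sub>R w) = h ug + t * a" for t
      unfolding h_def a_def
      by (simp only: linear_add[OF LamL] linear_add[OF iotaL] linear_add[OF t0NL]
          linear_scale[OF LamL] linear_scale[OF iotaL] linear_scale[OF t0NL]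
          inner_add_right inner_scaleR_right ring_distribs)
    have inV: "ug + t *\<^sub>R w \<in> Vg tr0D gD" for t
      using wV ug unfolding V0_def vgV by (simp add: linear_add[OF t0DL] linear_scale[OF t0DL])
    have "(SUP v\<in>Vg tr0D gD. ereal (h v)) = \<infinity>"
      unfolding SUP_eq_top_iff[where 'a=ereal, unfolded top_ereal_def]
    proof (intro allI impI)
      fix x :: ereal assume "x < \<infinity>"
      then obtain M where M: "x \<le> ereal M"
        by (cases x) auto
      define t where "t = (M + 1 - h ug) / a"
      have "h (ug + t *\<^sub>R w) = M + 1" using hlin a unfolding t_def a_def by simp
      then have "x < ereal (h (ug + t *\<^sub>R w))" using M by (simp add: order_le_less_trans)
      then show "\<exists>i\<in>Vg tr0D gD. x < ereal (h i)" using inV by blast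
    qed
    then have "Fstar Lam iota tr0D tr0N f gD gN \<tau> = \<infinity>" unfolding FsRew h_def by simp
    then show ?thesis using False Gs[of \<tau>] by simp
  qed
  have part3: "Jp A Lam iota tr0N f gN u = Jd Ainv tr1D gD \<sigma> \<and> \<sigma> = - A (Lam u)"
    if uV: "u \<in> Vg tr0D gD"
      and umin: "\<forall>v\<in>Vg tr0D gD. Jp A Lam iota tr0N f gN u \<le> Jp A Lam iota tr0N f gN v"
      and sS: "\<sigma> \<in> Sigma_fg Sig Lt tr1N f gN"
      and smax: "\<forall>\<tau>\<in>Sigma_fg Sig Lt tr1N f gN. Jd Ainv tr1D gD \<tau> \<le> Jd Ainv tr1D gD \<sigma>"
    for u \<sigma>
  proof -
    define \<tau>0 where "\<tau>0 = - A (Lam u)"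
    have EL: "\<tau>0 \<bullet> Lam w + f \<bullet> iota w - gN \<bullet> tr0N w = 0" if wV: "w \<in> V0" for w
    proof -
      define a where "a = A (Lam u) \<bullet> Lam w - f \<bullet> iota w + gN \<bullet> tr0N w"
      define b where "b = 1/2 * (A (Lam w) \<bullet> Lam w)"
      have exp: "Jp A Lam iota tr0N f gN (u + t *\<^sub>R w) = Jp A Lam iota tr0N f gN u + a * t + b * t^2" for t
      proof -
        have s: "A (Lam w) \<bullet> Lam u = A (Lam u) \<bullet> Lam w"
          using A_sym[of "Lam w" "Lam u"] by (simp add: inner_commute)
have L: "Lam (u + t *\<^sub>R w) = Lam u + t *\<^sub>R Lam w"
          by (simp only: linear_add[OF LamL] linear_scale[OF LamL])
        have I: "iota (u + t *\<^sub>R w) = iota u + t *\<^sub>R iota w"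
          by (simp only: linear_add[OF iotaL] linear_scale[OF iotaL])
        have N: "tr0N (u + t *\<^sub>R w) = tr0N u + t *\<^sub>R tr0N w"
          by (simp only: linear_add[OF t0NL] linear_scale[OF t0NL])
        have Q: "A (Lam u + t *\<^sub>R Lam w) \<bullet> (Lam u + t *\<^sub>R Lam w)
           = A (Lam u) \<bullet> Lam u + 2 * t * (A (Lam u) \<bullet> Lam w) + t\<^sup>2 * (A (Lam w) \<bullet> Lam w)"
          using s by (simp only: linear_add[OF AL] linear_scale[OF AL] inner_add_left inner_add_right
              inner_scaleR_left inner_scaleR_right power2_eq_square) (simp add: ring_distribs mult.assoc)
        show ?thesis unfolding Jp_def a_def b_def L I N Q
          by (simp only: inner_add_right inner_scaleR_right ring_distribs) (simp add: ring_distribs)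
      qed
      have inV: "u + t *\<^sub>R w \<in> Vg tr0D gD" for t
        using wV uV unfolding V0_def vgV by (simp add: linear_add[OF t0DL] linear_scale[OF t0DL])
      have q: "0 \<le> a * t + b * t^2" for t using umin inV[of t] exp[of t] by auto
      have "a = 0" using q by (rule quad_zero)
      then show ?thesis unfolding \<tau>0_def a_def by simp
    qed
    have t0S: "\<tau>0 \<in> Sigma_fg Sig Lt tr1N f gN" using KEY EL by blast
    have "A (- Lam u) = \<tau>0" unfolding \<tau>0_def by (simp add: linear_neg[OF AL])
    then have "Ainv \<tau>0 = - Lam u" using Ainv_left by metis
    then have "Jp A Lam iota tr0N f gN u = Jd Ainv tr1D gD \<tau>0" using WD[OF t0S uV] by simp
    then have ge: "Jd Ainv tr1D gD \<sigma> \<ge> Jp A Lam iota tr0N f gN u" using smax t0S by auto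
    have "Jp A Lam iota tr0N f gN u - Jd Ainv tr1D gD \<sigma> \<ge> 0"
      using WD[OF sS uV] Apos[of "Lam u + Ainv \<sigma>"] by simp
    then have eq: "Jp A Lam iota tr0N f gN u = Jd Ainv tr1D gD \<sigma>" using ge by simp
    then have "A (Lam u + Ainv \<sigma>) \<bullet> (Lam u + Ainv \<sigma>) = 0" using WD[OF sS uV] by simp
    then have "Lam u + Ainv \<sigma> = 0" by (rule Azero)
    then have "Ainv \<sigma> = - Lam u" by (simp add: add_eq_0_iff)
    then have "\<sigma> = A (- Lam u)" using Ainv_right by metis
    then show ?thesis using eq by (simp add: linear_neg[OF AL])
  qed
  show ?thesis using part1 part2 part3 by blast
qed

end
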